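(* Let $$\tilde U(x)=\frac12+\frac{1}{2\sqrt2}+\sqrt{1-4x}\left(-\frac{1}{\sqrt2}+\log_2\!\left(\sqrt{1-4x}\right)+\frac14\right),$$ (principal branches, analytic for $|x|<1/4$). Then, as $n\to\infty$, $$E_n(\gamma)\sim\frac{[x^n]\tilde U(x)}{C^{(n)}},$$ where $E_n(\gamma)$ is the average of $\gamma(t)$ over all $t\in\mathcal{T}_n$ and $C^{(n)}=|\mathcal{T}_n|=[x^n]\frac{1-\sqrt{1-4x}}{2}$ is the Catalan number.
   Context: $\mathcal{T}_n$ is the set of ordered rooted binary trees (every internal node has exactly two ordered children) with $n$ leaves. A tree is a caterpillar if every node is either a leaf or has at least one leaf among its direct children. The subtree of $t$ at a node $v$ consists of $v$ and all its descendants, and $\gamma(t)$ is the largest number of leaves of a caterpillar occurring as the subtree of $t$ at some node. $[x^n]G(x)$ denotes the coefficient of $x^n$ in the power series $G$. *)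

theory Defs
  imports "HOL-Analysis.Analysis" "HOL-Library.Landau_Symbols"
begin

datatype btree = Leaf | Node btree btree

fun leaves :: "btree \<Rightarrow> nat" where
  "leaves Leaf = 1"
| "leaves (Node l r) = leaves l + leaves r"

definition trees :: "nat \<Rightarrow> btree set" where
  "trees n = {t. leaves t = n}"

fun caterpillar :: "btree \<Rightarrow> bool" where
  "caterpillar Leaf = True"
| "caterpillar (Node l r) = ((l = Leaf \<or> r = Leaf) \<and> caterpillar l \<and> caterpillar r)"

fun subtrees :: "btree \<Rightarrow> btree set" where
  "subtrees Leaf = {Leaf}"
| "subtrees (Node l r) = insert (Node l r) (subtrees l \<union> subtrees r)"

definition gamma :: "btree \<Rightarrow> nat" where
  "gamma t = Max (leaves ` {s \<in> subtrees t. caterpillar s})"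

definition avg_gamma :: "nat \<Rightarrow> real" where
  "avg_gamma n = (\<Sum>t\<in>trees n. real (gamma t)) / real (card (trees n))"

definition U_tilde :: "real \<Rightarrow> real" where
  "U_tilde x = 1/2 + 1 / (2 * sqrt 2)
     + sqrt (1 - 4*x) * (- 1 / sqrt 2 + log 2 (sqrt (1 - 4*x)) + 1/4)"

definition taylor_coeff :: "(real \<Rightarrow> real) \<Rightarrow> nat \<Rightarrow> real" where
  "taylor_coeff f n = (deriv ^^ n) f 0 / fact n"

end

theory Submission
  imports Defs "HOL-Computational_Algebra.Formal_Power_Series" "HOL-Real_Asymp.Real_Asymp"
    "HOL-Analysis.Harmonic_Numbers"
begin


lemma leaves_ge1: "leaves t \<ge> 1"
  by (induct t) auto

lemma trees_0: "trees 0 = {}"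
  using leaves_ge1 by (auto simp: trees_def Suc_le_eq)

lemma trees_1: "trees (Suc 0) = {Leaf}"
proof -
  have "leaves t = 1 \<Longrightarrow> t = Leaf" for t
  proof (cases t)
    case (Node l r) assume "leaves t = 1"
    then show ?thesis using Node leaves_ge1[of l] leaves_ge1[of r] by simp
  qed
  then show ?thesis by (auto simp: trees_def)
qed

lemma trees_decomp:
  assumes "n \<noteq> 1"
  shows "trees n = (\<lambda>(i,l,r). Node l r) ` (SIGMA i:{..n}. trees i \<times> trees (n-i))"
proof (intro equalityI subsetI)
  fix t assume t: "t \<in> trees n"
  show "t \<in> (\<lambda>(i,l,r). Node l r) ` (SIGMA i:{..n}. trees i \<times> trees (n-i))"
  proof (cases t)
    case Leaf then show ?thesis using t assms by (simp add: trees_def)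
  next
    case (Node l r)
    then have "(leaves l, l, r) \<in> (SIGMA i:{..n}. trees i \<times> trees (n-i))"
      using t by (auto simp: trees_def)
    then show ?thesis using Node by force
  qed
next
  fix t assume "t \<in> (\<lambda>(i,l,r). Node l r) ` (SIGMA i:{..n}. trees i \<times> trees (n-i))"
  then show "t \<in> trees n" by (auto simp: trees_def)
qed

lemma finite_trees: "finite (trees n)"
proof (induction n rule: less_induct)
  case (less n)
  show ?case
  proof (cases "n = 1")
    case True then show ?thesis by (simp add: trees_1)
  next
    case False
    have "finite (SIGMA i:{..n}. trees i \<times> trees (n-i))"
    proof (rule finite_SigmaI)
      fix i assume "i \<in> {..n}"
      show "finite (trees i \<times> trees (n-i))"
      proof (cases "i = 0 \<or> i = n")
        case True then show ?thesis by (auto simp: trees_0)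
      next
        case False then show ?thesis using \<open>i \<in> {..n}\<close> by (intro finite_cartesian_product less) auto
      qed
    qed auto
    then show ?thesis using trees_decomp[OF False] by simp
  qed
qed

lemma sum_trees:
  fixes G :: "btree \<Rightarrow> real"
  shows "(\<Sum>t\<in>trees n. G t) = (if n = 1 then G Leaf else 0)
           + (\<Sum>i\<le>n. \<Sum>l\<in>trees i. \<Sum>r\<in>trees (n-i). G (Node l r))"
proof (cases "n = 1")
  case True
  have "(\<Sum>i\<le>n. \<Sum>l\<in>trees i. \<Sum>r\<in>trees (n-i). G (Node l r)) = 0"
    using True by (simp add: atMost_Suc trees_0)
  then show ?thesis using True by (simp add: trees_1)
next
  case False
  have inj: "inj_on (\<lambda>(i,l,r). Node l r) (SIGMA i:{..n}. trees i \<times> trees (n-i))"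
    by (auto simp: inj_on_def trees_def)
  have "(\<Sum>t\<in>trees n. G t) = (\<Sum>(i,l,r)\<in>(SIGMA i:{..n}. trees i \<times> trees (n-i)). G (Node l r))"
    by (subst trees_decomp[OF False], subst sum.reindex[OF inj]) (simp add: case_prod_unfold)
  also have "\<dots> = (\<Sum>i\<le>n. \<Sum>(l,r)\<in>trees i \<times> trees (n-i). G (Node l r))"
    by (subst sum.Sigma[symmetric]) (auto simp: finite_trees)
  also have "\<dots> = (\<Sum>i\<le>n. \<Sum>l\<in>trees i. \<Sum>r\<in>trees (n-i). G (Node l r))"
    by (simp add: sum.cartesian_product)
  finally show ?thesis using False by simp
qed


definition conv :: "(nat \<Rightarrow> real) \<Rightarrow> (nat \<Rightarrow> real) \<Rightarrow> nat \<Rightarrow> real" where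
  "conv f g n = (\<Sum>i\<le>n. f i * g (n-i))"

definition ct :: "nat \<Rightarrow> real" where "ct n = real (card (trees n))"

lemma ct_0: "ct 0 = 0" by (simp add: ct_def trees_0)

lemma ct_rec: "ct n = (if n = 1 then 1 else 0) + conv ct ct n"
  using sum_trees[of "\<lambda>_. 1" n] by (simp add: conv_def ct_def)

lemma conv_unique_cat:
  assumes "X 0 = 0" "Y 0 = 0"
   "\<And>n. X n = e n + conv X X n" "\<And>n. Y n = e n + conv Y Y n"
  shows "X n = Y n"
proof (induction n rule: less_induct)
  case (less n)
  have "conv X X n = conv Y Y n"
    unfolding conv_def
  proof (rule sum.cong[OF refl])
    fix i assume i: "i \<in> {..n}"
    show "X i * X (n-i) = Y i * Y (n-i)"
    proof (cases "i = 0 \<or> i = n")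
      case True then show ?thesis using assms(1,2) by auto
    next
      case False then have "i < n" "n - i < n" using i by auto
      then show ?thesis using less by simp
    qed
  qed
  then show ?case using assms(3,4) by metis
qed

lemma conv_unique_lin:
  assumes "X 0 = 0" "Y 0 = 0"
   "\<And>n. X n = e n + conv X ct n + conv ct X n" "\<And>n. Y n = e n + conv Y ct n + conv ct Y n"
  shows "X n = Y n"
proof (induction n rule: less_induct)
  case (less n)
  have "conv X ct n = conv Y ct n"
    unfolding conv_def
  proof (rule sum.cong[OF refl])
    fix i assume i: "i \<in> {..n}"
    show "X i * ct (n-i) = Y i * ct (n-i)"
    proof (cases "i = n")
      case True then show ?thesis by (simp add: ct_0)
    next
      case False then have "i < n" using i by auto
      then show ?thesis using less by simp
    qed
  qed
  moreover have "conv ct X n = conv ct Y n"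
    unfolding conv_def
  proof (rule sum.cong[OF refl])
    fix i assume i: "i \<in> {..n}"
    show "ct i * X (n-i) = ct i * Y (n-i)"
    proof (cases "i = 0")
      case True then show ?thesis by (simp add: ct_0)
    next
      case False then have "n - i < n" using i by auto
      then show ?thesis using less by simp
    qed
  qed
  ultimately show ?case using assms(3,4) by metis
qed

definition bb :: "nat \<Rightarrow> real" where "bb n = ((1/2) gchoose n) * (-4)^n"

lemma bb_0: "bb 0 = 1" by (simp add: bb_def)

lemma conv_bb: "conv bb bb n = (if n = 0 then 1 else if n = 1 then -4 else 0)"
proof -
  have "conv bb bb n = (-4)^n * (\<Sum>k\<in>{0..n}. ((1/2::real) gchoose k) * ((1/2) gchoose (n - k)))"
    unfolding conv_def bb_def sum_distrib_left atMost_atLeast0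
    by (intro sum.cong refl) (auto simp: power_add[symmetric])
  also have "\<dots> = (-4)^n * ((1::real) gchoose n)"
    by (subst gbinomial_Vandermonde) simp
  also have "((1::real) gchoose n) = of_nat (1 choose n)"
    using binomial_gbinomial[of 1 n, where 'a=real] by simp
  finally show ?thesis by (cases n) (auto simp: binomial_eq_0)
qed

definition cc :: "nat \<Rightarrow> real" where "cc n = (if n = 0 then 0 else - bb n / 2)"

lemma cc_alt: "cc n = - (bb n - (if n = 0 then 1 else 0)) / 2"
  by (simp add: cc_def bb_0)

lemma conv_cc: "conv cc cc n = (conv bb bb n - 2 * bb n + (if n = 0 then 1 else 0)) / 4"
proof -
  have "conv cc cc n = (\<Sum>i\<le>n. (bb i * bb (n-i) - (if i = 0 then bb (n-i) else 0)
        - (if i = n then bb i else 0) + (if i = 0 then (if n = 0 then 1 else 0) else 0))) / 4"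
    unfolding conv_def cc_alt sum_divide_distrib
    by (intro sum.cong refl) (auto simp: field_simps)
  also have "\<dots> = (conv bb bb n - bb n - bb n + (if n = 0 then 1 else 0)) / 4"
    by (simp add: sum.distrib sum_subtractf conv_def)
  finally show ?thesis by simp
qed

lemma cc_rec: "cc n = (if n = 1 then 1 else 0) + conv cc cc n"
  by (cases "n = 0") (auto simp: conv_cc conv_bb cc_def bb_0 bb_def)

lemma ct_eq_cc: "ct n = cc n"
  by (rule conv_unique_cat[OF ct_0 _ ct_rec cc_rec]) (simp add: cc_def)

lemma bb_Suc: "real (Suc n) * bb (Suc n) = (4 * real n - 2) * bb n"
proof -
  have E: "real (Suc n) * ((1/2::real) gchoose Suc n) = (1/2 - real n) * ((1/2) gchoose n)"
    using gbinomial_mult_1[of "1/2::real" n] by (simp add: algebra_simps)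
  have "real (Suc n) * bb (Suc n) = (-4)^Suc n * (real (Suc n) * ((1/2::real) gchoose Suc n))"
    unfolding bb_def by (simp only: mult_ac)
  also have "\<dots> = (4 * real n - 2) * bb n" unfolding E bb_def by (simp add: algebra_simps)
  finally show ?thesis .
qed

fun comb :: "nat \<Rightarrow> btree" where "comb 0 = Leaf" | "comb (Suc k) = Node Leaf (comb k)"

lemma leaves_comb: "leaves (comb k) = Suc k" by (induct k) auto

lemma ct_pos: "n \<ge> 1 \<Longrightarrow> ct n > 0"
proof -
  assume "n \<ge> 1"
  then have "comb (n-1) \<in> trees n" by (simp add: trees_def leaves_comb)
  then have "card (trees n) > 0" using finite_trees card_gt_0_iff by blast
  then show ?thesis by (simp add: ct_def)
qed

lemma ct_Suc: "n \<ge> 1 \<Longrightarrow> real (Suc n) * ct (Suc n) = (4 * real n - 2) * ct n"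
  using bb_Suc[of n] by (simp add: ct_eq_cc cc_def field_simps)

lemma ct_Suc': "n \<ge> 1 \<Longrightarrow> ct (Suc n) = (4 - 6 / real (Suc n)) * ct n"
  using ct_Suc[of n] by (simp add: field_simps)

lemma ct_up: "m \<ge> 1 \<Longrightarrow> ct (m + d) \<le> 4^d * ct m"
proof (induction d)
  case 0 then show ?case by simp
next
  case (Suc d)
  let ?i = "m + d"
  have i1: "?i \<ge> 1" using Suc by simp
  have "ct (Suc ?i) = (4 - 6 / real (Suc ?i)) * ct ?i" using ct_Suc'[OF i1] .
  also have "\<dots> \<le> 4 * ct ?i"
    using ct_pos[OF i1] by (intro mult_right_mono) auto
  also have "\<dots> \<le> 4 * (4^d * ct m)" using Suc by simp
  finally show ?case by simp
qed

lemma ct_low: "m \<ge> 1 \<Longrightarrow> (4 - 6 / real (Suc m))^d * ct m \<le> ct (m + d)"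
proof (induction d)
  case 0 then show ?case by simp
next
  case (Suc d)
  let ?i = "m + d"
  have i1: "?i \<ge> 1" using Suc by simp
  have q0: "0 \<le> 4 - 6 / real (Suc m)" using Suc.prems by (simp add: field_simps)
  have "(4 - 6 / real (Suc m))^Suc d * ct m = (4 - 6 / real (Suc m)) * ((4 - 6 / real (Suc m))^d * ct m)"
    by simp
  also have "\<dots> \<le> (4 - 6 / real (Suc m)) * ct ?i"
    using Suc q0 by (intro mult_left_mono) auto
  also have "\<dots> \<le> (4 - 6 / real (Suc ?i)) * ct ?i"
    using ct_pos[OF i1] by (intro mult_right_mono) (auto simp: frac_le)
  also have "\<dots> = ct (Suc ?i)" using ct_Suc'[OF i1] by simp
  finally show ?case by simp
qed


definition sh :: "nat \<Rightarrow> (nat \<Rightarrow> real) \<Rightarrow> nat \<Rightarrow> real" where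
  "sh d f n = (if d \<le> n then f (n - d) else 0)"

lemma sh_Suc: "sh (Suc d) f = sh 1 (sh d f)"
  by (auto simp: sh_def fun_eq_iff)

lemma sh_add: "sh (a + b) f = sh a (sh b f)"
  by (auto simp: sh_def fun_eq_iff)

lemma conv_sh1: "conv (sh 1 f) g n = sh 1 (conv f g) n"
proof (cases n)
  case 0 then show ?thesis by (simp add: conv_def sh_def)
next
  case (Suc m)
  have "conv (sh 1 f) g n = (\<Sum>i\<le>m. f i * g (m - i))"
    unfolding conv_def Suc sum.atMost_Suc_shift by (simp add: sh_def)
  then show ?thesis by (simp add: Suc sh_def conv_def)
qed

lemma conv_sh_left: "conv (sh d f) g n = sh d (conv f g) n"
proof (induction d arbitrary: f n)
  case 0 then show ?case by (simp add: sh_def)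
next
  case (Suc d)
  have ih: "conv (sh d f) g = sh d (conv f g)" using Suc.IH by (simp add: fun_eq_iff)
  have "conv (sh (Suc d) f) g n = sh 1 (conv (sh d f) g) n"
    by (subst sh_Suc) (rule conv_sh1)
  also have "\<dots> = sh 1 (sh d (conv f g)) n" by (simp only: ih)
  also have "\<dots> = sh (Suc d) (conv f g) n" by (simp only: sh_Suc[of d])
  finally show ?case .
qed

lemma conv_comm: "conv f g n = conv g f n"
  unfolding conv_def
  by (rule sum.reindex_bij_witness[where i="\<lambda>i. n - i" and j="\<lambda>i. n - i"]) auto

lemma conv_sh_right: "conv g (sh d f) n = sh d (conv g f) n"
proof -
  have "conv f g = conv g f" by (rule ext, rule conv_comm)
  then show ?thesis using conv_comm[of g "sh d f" n] conv_sh_left[of d f g n] by simp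
qed

lemma conv_sh_both: "conv (sh a f) (sh b g) n = sh (a + b) (conv f g) n"
proof -
  have "conv (sh a f) (sh b g) n = sh a (conv f (sh b g)) n" by (rule conv_sh_left)
  also have "conv f (sh b g) = sh b (conv f g)" by (simp add: fun_eq_iff conv_sh_right)
  finally show ?thesis by (simp add: sh_add)
qed

lemma conv_scale_left: "conv (\<lambda>m. c * f m) g n = c * conv f g n"
  by (simp add: conv_def sum_distrib_left mult.assoc)

lemma conv_scale_right: "conv f (\<lambda>m. c * g m) n = c * conv f g n"
  by (simp add: conv_def sum_distrib_left mult_ac)

lemma conv_scale_left': "conv (\<lambda>m. c * f m) g = (\<lambda>n. c * conv f g n)"
  by (rule ext) (rule conv_scale_left)

lemma conv_scale_right': "conv f (\<lambda>m. c * g m) = (\<lambda>n. c * conv f g n)"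
  by (rule ext) (rule conv_scale_right)

definition Lk :: "nat \<Rightarrow> real" where "Lk n = real n * ct n"
definition L2 :: "nat \<Rightarrow> real" where "L2 n = real n * (real n - 1) * ct n"

lemma Lk_rec: "Lk n = (if n = 1 then 1 else 0) + conv Lk ct n + conv ct Lk n"
proof -
  have "conv Lk ct n + conv ct Lk n = (\<Sum>i\<le>n. real n * (ct i * ct (n - i)))"
    unfolding conv_def Lk_def sum.distrib[symmetric]
    by (intro sum.cong refl) (auto simp: of_nat_diff algebra_simps)
  also have "\<dots> = real n * conv ct ct n" by (simp add: conv_def sum_distrib_left)
  also have "\<dots> = real n * (ct n - (if n = 1 then 1 else 0))" using ct_rec[of n] by simp
  finally show ?thesis by (auto simp: Lk_def)
qed

lemma L2_rec: "L2 n = conv L2 ct n + conv ct L2 n + 2 * conv Lk Lk n"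
proof -
  have "conv L2 ct n + conv ct L2 n + 2 * conv Lk Lk n
      = (\<Sum>i\<le>n. real n * (real n - 1) * (ct i * ct (n - i)))"
    unfolding conv_def Lk_def L2_def sum.distrib[symmetric] sum_distrib_left
    by (intro sum.cong refl) (auto simp: of_nat_diff algebra_simps)
  also have "\<dots> = real n * (real n - 1) * conv ct ct n" by (simp add: conv_def sum_distrib_left)
  also have "\<dots> = real n * (real n - 1) * (ct n - (if n = 1 then 1 else 0))" using ct_rec[of n] by simp
  finally show ?thesis by (auto simp: L2_def)
qed

definition topc :: "nat \<Rightarrow> btree \<Rightarrow> nat" where
  "topc j t = (if caterpillar t \<and> leaves t = j then 1 else 0)"

fun cnt :: "nat \<Rightarrow> btree \<Rightarrow> nat" where
  "cnt j Leaf = topc j Leaf"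
| "cnt j (Node l r) = topc j (Node l r) + cnt j l + cnt j r"

lemma cnt_small: "leaves t < j \<Longrightarrow> cnt j t = 0"
  by (induct t) (auto simp: topc_def)

definition cp :: "nat \<Rightarrow> nat" where "cp j = card {s \<in> trees j. caterpillar s}"

lemma sum_top: "(\<Sum>t\<in>trees n. real (topc j t)) = (if n = j then real (cp j) else 0)"
proof (cases "n = j")
  case True
  have "(\<Sum>t\<in>trees n. real (topc j t)) = (\<Sum>t\<in>trees n. of_bool (caterpillar t))"
    by (intro sum.cong refl) (auto simp: topc_def trees_def True)
  also have "\<dots> = real (cp j)" using finite_trees True
    by (simp add: cp_def Collect_conj_eq Int_commute trees_def)
  finally show ?thesis using True by simp
next
  case False then show ?thesis by (intro trans[OF sum.neutral]) (auto simp: topc_def trees_def)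
qed

lemma trees_2: "trees 2 = {Node Leaf Leaf}"
proof -
  have "t \<in> trees 2 \<Longrightarrow> t = Node Leaf Leaf" for t
  proof (cases t)
    case Leaf then show "t \<in> trees 2 \<Longrightarrow> ?thesis" by (simp add: trees_def)
  next
    case (Node l r)
    assume "t \<in> trees 2"
    then have "leaves l = 1" "leaves r = 1" using Node leaves_ge1[of l] leaves_ge1[of r]
      by (auto simp: trees_def)
    then have "l \<in> trees (Suc 0)" "r \<in> trees (Suc 0)" by (auto simp: trees_def)
    then show ?thesis using Node by (simp add: trees_1)
  qed
  then show ?thesis by (auto simp: trees_def)
qed

lemma cp_2: "cp 2 = 1"
proof -
  have "{s\<in>trees 2. caterpillar s} = {Node Leaf Leaf}" by (auto simp: trees_2)
  then show ?thesis by (simp add: cp_def)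
qed

lemma cp_Suc: assumes "j \<ge> 2" shows "cp (Suc j) = 2 * cp j"
proof -
  let ?A = "{s \<in> trees j. caterpillar s}"
  have eq: "{s \<in> trees (Suc j). caterpillar s} = Node Leaf ` ?A \<union> (\<lambda>s. Node s Leaf) ` ?A"
  proof (intro equalityI subsetI)
    fix s assume s: "s \<in> {s \<in> trees (Suc j). caterpillar s}"
    then obtain l r where lr: "s = Node l r" using assms by (cases s) (auto simp: trees_def)
    then show "s \<in> Node Leaf ` ?A \<union> (\<lambda>s. Node s Leaf) ` ?A" using s
      by (auto simp: trees_def)
  qed (auto simp: trees_def)
  have disj: "Node Leaf ` ?A \<inter> (\<lambda>s. Node s Leaf) ` ?A = {}"
    using assms by (auto simp: trees_def)
  have fin: "finite ?A" using finite_trees by simp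
  have "cp (Suc j) = card (Node Leaf ` ?A) + card ((\<lambda>s. Node s Leaf) ` ?A)"
    unfolding cp_def eq using fin disj by (intro card_Un_disjoint) auto
  also have "\<dots> = 2 * cp j" unfolding cp_def
    by (subst card_image, simp add: inj_on_def)+ simp
  finally show ?thesis .
qed

lemma cp_eq: "j \<ge> 2 \<Longrightarrow> cp j = 2 ^ (j - 2)"
proof (induction j rule: nat_induct_at_least)
  case base then show ?case by (simp add: cp_2)
next
  case (Suc j)
  have "Suc j - 2 = Suc (j - 2)" using Suc(1) by simp
  then show ?case using Suc by (simp add: cp_Suc)
qed

definition M :: "nat \<Rightarrow> nat \<Rightarrow> real" where
  "M j n = (\<Sum>t\<in>trees n. real (cnt j t))"

lemma double_sum_lin:
  fixes f g :: "btree \<Rightarrow> real"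
  shows "(\<Sum>l\<in>A. \<Sum>r\<in>B. f l + g r) = sum f A * real (card B) + real (card A) * sum g B"
  by (simp add: sum.distrib sum_distrib_right mult.commute)

lemma M_rec: "M j n = (if n = j then real (cp j) else 0) + conv (M j) ct n + conv ct (M j) n"
proof -
  define ch where "ch t = (case t of Leaf \<Rightarrow> 0 | Node l r \<Rightarrow> real (cnt j l) + real (cnt j r))" for t
  have split: "real (cnt j t) = real (topc j t) + ch t" for t by (cases t) (auto simp: ch_def)
  have "(\<Sum>t\<in>trees n. ch t) = (\<Sum>i\<le>n. \<Sum>l\<in>trees i. \<Sum>r\<in>trees (n-i). real (cnt j l) + real (cnt j r))"
    using sum_trees[of ch n] by (simp add: ch_def)
  also have "\<dots> = conv (M j) ct n + conv ct (M j) n"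
    unfolding double_sum_lin conv_def M_def ct_def sum.distrib by (simp add: sum_distrib_left sum_distrib_right mult_ac)
  finally show ?thesis unfolding M_def split sum.distrib sum_top by simp
qed

lemma M_0: "M j 0 = 0" by (simp add: M_def trees_0)

lemma M_eq: assumes "j \<ge> 1" shows "M j n = sh (j - 1) (\<lambda>m. real (cp j) * Lk m) n"
proof (rule conv_unique_lin[where e = "\<lambda>n. if n = j then real (cp j) else 0"])
  show "M j 0 = 0" by (rule M_0)
  show "sh (j - 1) (\<lambda>m. real (cp j) * Lk m) 0 = 0" by (simp add: sh_def Lk_def)
  show "M j n = (if n = j then real (cp j) else 0) + conv (M j) ct n + conv ct (M j) n" for n
    by (rule M_rec)
  fix n
  have "sh (j - 1) (\<lambda>m. real (cp j) * Lk m) n =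
        sh (j - 1) (\<lambda>m. real (cp j) * (if m = 1 then 1 else 0) + real (cp j) * conv Lk ct m + real (cp j) * conv ct Lk m) n"
    by (subst Lk_rec) (simp add: algebra_simps)
  also have "\<dots> = (if n = j then real (cp j) else 0) + conv (sh (j - 1) (\<lambda>m. real (cp j) * Lk m)) ct n
      + conv ct (sh (j - 1) (\<lambda>m. real (cp j) * Lk m)) n"
    unfolding conv_sh_left conv_sh_right using assms
    by (auto simp: sh_def conv_scale_left conv_scale_right)
  finally show "sh (j - 1) (\<lambda>m. real (cp j) * Lk m) n = (if n = j then real (cp j) else 0) + conv (sh (j - 1) (\<lambda>m. real (cp j) * Lk m)) ct n
      + conv ct (sh (j - 1) (\<lambda>m. real (cp j) * Lk m)) n" .
qed

definition D :: "nat \<Rightarrow> nat \<Rightarrow> real" where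
  "D j n = (\<Sum>t\<in>trees n. real (cnt j t) * (real (cnt j t) - 1))"

lemma F_Leaf: "real (cnt j Leaf) * (real (cnt j Leaf) - 1) = 0"
  by (simp add: topc_def)

lemma F_Node:
  "real (cnt j (Node l r)) * (real (cnt j (Node l r)) - 1) =
   real (cnt j l) * (real (cnt j l) - 1) + real (cnt j r) * (real (cnt j r) - 1)
   + 2 * (real (cnt j l) * real (cnt j r))"
proof -
  have alg: "(a + b) * (a + b - 1) = a * (a - 1) + b * (b - 1) + 2 * (a * b)" for a b :: real
    by (simp add: algebra_simps)
  have e: "cnt j (Node l r) = topc j (Node l r) + cnt j l + cnt j r" by simp
  show ?thesis
  proof (cases "topc j (Node l r) = 1")
    case True
    then have c: "caterpillar (Node l r) \<and> leaves (Node l r) = j"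
      unfolding topc_def by (metis zero_neq_one)
    then have "leaves l < j" "leaves r < j" using leaves_ge1[of l] leaves_ge1[of r] by auto
    then have "cnt j l = 0" "cnt j r = 0" by (auto intro: cnt_small)
    then show ?thesis unfolding e True by simp
  next
    case False
    then have "topc j (Node l r) = 0" unfolding topc_def by presburger
    then show ?thesis unfolding e using alg[of "real (cnt j l)" "real (cnt j r)"] by simp
  qed
qed

lemma triple_sum_lin:
  fixes f g h k :: "btree \<Rightarrow> real"
  assumes "finite A" "finite B"
  shows "(\<Sum>l\<in>A. \<Sum>r\<in>B. f l + g r + 2 * (h l * k r)) =
    sum f A * real (card B) + real (card A) * sum g B + 2 * (sum h A * sum k B)"
proof -
  have "(\<Sum>l\<in>A. \<Sum>r\<in>B. 2 * (h l * k r)) = (\<Sum>l\<in>A. (2 * h l) * sum k B)"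
    by (simp add: sum_distrib_left mult.assoc)
  also have "\<dots> = (\<Sum>l\<in>A. 2 * h l) * sum k B" by (simp add: sum_distrib_right)
  finally have p: "(\<Sum>l\<in>A. \<Sum>r\<in>B. 2 * (h l * k r)) = 2 * (sum h A * sum k B)"
    by (simp add: sum_distrib_left[symmetric])
  have q: "(\<Sum>l\<in>A. \<Sum>r\<in>B. f l + g r) = sum f A * real (card B) + real (card A) * sum g B"
    by (rule double_sum_lin)
  show ?thesis unfolding sum.distrib p q[symmetric] by simp
qed

lemma D_rec: "D j n = conv (D j) ct n + conv ct (D j) n + 2 * conv (M j) (M j) n"
proof -
  have "D j n = (\<Sum>i\<le>n. \<Sum>l\<in>trees i. \<Sum>r\<in>trees (n-i).
       real (cnt j l) * (real (cnt j l) - 1) + real (cnt j r) * (real (cnt j r) - 1)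
       + 2 * (real (cnt j l) * real (cnt j r)))"
    unfolding D_def by (subst sum_trees) (simp only: F_Leaf F_Node, simp)
  also have "\<dots> = (\<Sum>i\<le>n. D j i * ct (n-i) + ct i * D j (n-i) + 2 * (M j i * M j (n-i)))"
    by (intro sum.cong refl, simp only: triple_sum_lin[OF finite_trees finite_trees])
       (simp add: D_def M_def ct_def)
  also have "\<dots> = conv (D j) ct n + conv ct (D j) n + 2 * conv (M j) (M j) n"
    by (simp add: conv_def sum.distrib sum_distrib_left)
  finally show ?thesis .
qed

lemma D_0: "D j 0 = 0" by (simp add: D_def trees_0)

lemma D_eq: assumes "j \<ge> 1" shows "D j n = sh (2 * (j - 1)) (\<lambda>m. real (cp j)^2 * L2 m) n"
proof (rule conv_unique_lin[where e = "\<lambda>n. 2 * conv (M j) (M j) n"])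
  show "D j 0 = 0" by (rule D_0)
  show "sh (2 * (j - 1)) (\<lambda>m. real (cp j)^2 * L2 m) 0 = 0" by (simp add: sh_def L2_def)
  show "D j n = 2 * conv (M j) (M j) n + conv (D j) ct n + conv ct (D j) n" for n
    using D_rec[of j n] by simp
  have Mf: "M j = sh (j - 1) (\<lambda>m. real (cp j) * Lk m)" using M_eq[OF assms] by (simp add: fun_eq_iff)
  fix n
  have "sh (2 * (j - 1)) (\<lambda>m. real (cp j)^2 * L2 m) n =
        sh (2 * (j - 1)) (\<lambda>m. real (cp j)^2 * conv L2 ct m + real (cp j)^2 * conv ct L2 m
            + 2 * (real (cp j) * real (cp j) * conv Lk Lk m)) n"
    by (subst L2_rec) (simp add: algebra_simps power2_eq_square)
  also have "\<dots> = 2 * conv (M j) (M j) n + conv (sh (2 * (j - 1)) (\<lambda>m. real (cp j)^2 * L2 m)) ct n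
      + conv ct (sh (2 * (j - 1)) (\<lambda>m. real (cp j)^2 * L2 m)) n"
    unfolding conv_sh_left conv_sh_right Mf conv_sh_both
    apply (simp only: conv_scale_left' conv_scale_right' sh_add[symmetric])
    apply (cases "2 * (j - 1) \<le> n")
     apply (simp_all only: sh_def if_True if_False mult_2[where 'a=nat])
    done
  finally show "sh (2 * (j - 1)) (\<lambda>m. real (cp j)^2 * L2 m) n = 2 * conv (M j) (M j) n + conv (sh (2 * (j - 1)) (\<lambda>m. real (cp j)^2 * L2 m)) ct n
      + conv ct (sh (2 * (j - 1)) (\<lambda>m. real (cp j)^2 * L2 m)) n" .
qed


lemma finite_subtrees: "finite (subtrees t)" by (induct t) auto
lemma Leaf_in_subtrees: "Leaf \<in> subtrees t" by (induct t) auto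
lemma leaves_subtree: "s \<in> subtrees t \<Longrightarrow> leaves s \<le> leaves t"
proof (induct t)
  case (Node l r) then show ?case by fastforce
qed simp

lemma gamma_set_ne: "leaves ` {s \<in> subtrees t. caterpillar s} \<noteq> {}"
  using Leaf_in_subtrees[of t] by auto

lemma gamma_set_fin: "finite (leaves ` {s \<in> subtrees t. caterpillar s})"
  using finite_subtrees[of t] by auto

lemma gamma_le: "gamma t \<le> leaves t"
  unfolding gamma_def using gamma_set_ne gamma_set_fin
  by (intro Max.boundedI) (auto intro: leaves_subtree)

lemma cnt_exists: "cnt j t \<ge> 1 \<Longrightarrow> \<exists>s\<in>subtrees t. caterpillar s \<and> leaves s = j"
proof (induct t)
  case Leaf then show ?case by (auto simp: topc_def split: if_splits)
next
  case (Node l r)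
  show ?case
  proof (cases "topc j (Node l r) \<ge> 1")
    case True then show ?thesis by (auto simp: topc_def split: if_splits)
  next
    case False
    then have "cnt j l \<ge> 1 \<or> cnt j r \<ge> 1" using Node.prems by auto
    then show ?thesis using Node.hyps by auto
  qed
qed

lemma gamma_ge: "cnt j t \<ge> 1 \<Longrightarrow> j \<le> gamma t"
  unfolding gamma_def using cnt_exists[of j t] gamma_set_fin[of t]
  by (auto intro!: Max_ge)

lemma spine: "caterpillar s \<Longrightarrow> 1 \<le> j \<Longrightarrow> j \<le> leaves s \<Longrightarrow> cnt j s \<ge> 1"
proof (induct s)
  case Leaf then show ?case by (simp add: topc_def)
next
  case (Node l r)
  show ?case
  proof (cases "j = leaves (Node l r)")
    case True then show ?thesis using Node.prems by (simp add: topc_def)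
  next
    case False
    then have jl: "j < leaves l + leaves r" using Node.prems by simp
    from Node.prems(1) have "l = Leaf \<or> r = Leaf" "caterpillar l" "caterpillar r" by auto
    then show ?thesis
    proof (elim disjE)
      assume "l = Leaf"
      then have "j \<le> leaves r" using jl by simp
      then have "cnt j r \<ge> 1" using Node.hyps(2) \<open>caterpillar r\<close> Node.prems(2) by simp
      then show ?thesis by simp
    next
      assume "r = Leaf"
      then have "j \<le> leaves l" using jl by simp
      then have "cnt j l \<ge> 1" using Node.hyps(1) \<open>caterpillar l\<close> Node.prems(2) by simp
      then show ?thesis by simp
    qed
  qed
qed

lemma cnt_mono: "s \<in> subtrees t \<Longrightarrow> cnt j s \<le> cnt j t"
proof (induct t)
  case Leaf then show ?case by simp
next
  case (Node l r)
  then show ?case by (auto intro: le_trans)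
qed

lemma gamma_cnt: "1 \<le> j \<Longrightarrow> j \<le> gamma t \<Longrightarrow> cnt j t \<ge> 1"
proof -
  assume j: "1 \<le> j" "j \<le> gamma t"
  have "gamma t \<in> leaves ` {s \<in> subtrees t. caterpillar s}"
    unfolding gamma_def using gamma_set_ne[of t] gamma_set_fin[of t] by (intro Max_in)
  then obtain s where s: "s \<in> subtrees t" "caterpillar s" "leaves s = gamma t" by auto
  then have "cnt j s \<ge> 1" using j by (intro spine) auto
  then show ?thesis using cnt_mono[OF s(1), of j] by simp
qed

lemma gamma_upper:
  assumes "k < K"
  shows "real (gamma t) \<le> real k + (\<Sum>j\<in>{k<..K}. real (cnt j t)) + real (leaves t) * real (cnt K t)"
proof -
  let ?g = "gamma t"
  have s0: "0 \<le> (\<Sum>j\<in>{k<..K}. real (cnt j t))" by (intro sum_nonneg) auto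
  show ?thesis
  proof (cases "?g \<le> k")
    case True
    have "0 \<le> real (leaves t) * real (cnt K t)" by simp
    then show ?thesis using s0 True by linarith
  next
    case False
    show ?thesis
    proof (cases "K \<le> ?g")
      case True
      then have "cnt K t \<ge> 1" using assms by (intro gamma_cnt) auto
      then have "real (leaves t) \<le> real (leaves t) * real (cnt K t)"
        using mult_left_mono[of 1 "real (cnt K t)" "real (leaves t)"] by simp
      moreover have "real ?g \<le> real (leaves t)" using gamma_le by simp
      ultimately show ?thesis using s0 by simp
    next
      case False2: False
      have "real ?g - real k = (\<Sum>j\<in>{k<..?g}. (1::real))" using False by simp
      also have "\<dots> \<le> (\<Sum>j\<in>{k<..?g}. real (cnt j t))"
        by (intro sum_mono) (use gamma_cnt in force)
      also have "\<dots> \<le> (\<Sum>j\<in>{k<..K}. real (cnt j t))"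
        using False2 by (intro sum_mono2) auto
      finally have "real ?g - real k \<le> (\<Sum>j\<in>{k<..K}. real (cnt j t))" .
      moreover have "0 \<le> real (leaves t) * real (cnt K t)" by simp
      ultimately show ?thesis by linarith
    qed
  qed
qed


lemma M_closed: assumes "1 \<le> j" "j \<le> n + 1" shows "M j n = real (cp j) * (real (n+1-j) * ct (n+1-j))"
proof -
  have a: "j - 1 \<le> n" "n - (j - 1) = n + 1 - j" using assms by auto
  show ?thesis using a by (simp add: M_eq[OF assms(1)] sh_def Lk_def)
qed

lemma D_closed: "1 \<le> j \<Longrightarrow> 2 * (j - 1) \<le> n \<Longrightarrow>
   D j n = real (cp j)^2 * (real (n - 2*(j-1)) * (real (n - 2*(j-1)) - 1) * ct (n - 2*(j-1)))"
  by (simp add: D_eq sh_def L2_def)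

lemma mu_upper:
  assumes "2 \<le> j" "4 * j \<le> n"
  shows "M j n / ct n \<le> 2 * real n / 2^j"
proof -
  obtain i where i: "j = i + 2" using assms(1) by (metis add.commute le_Suc_ex)
  define m where "m = n + 1 - j"
  have m1: "m \<ge> 1" and mn: "m \<le> n" and mi: "m + (i + 1) = n" "m + 1 = n - i"
    using assms i by (auto simp: m_def)
  have ctm: "ct m > 0" using ct_pos m1 by simp
  have ctn: "ct n > 0" using ct_pos assms by simp
  define x :: real where "x = 3 / (2 * (real m + 1))"
  have x0: "0 \<le> x" "x \<le> 1" using m1 by (auto simp: x_def field_simps)
  have q: "4 - 6 / real (Suc m) = 4 * (1 - x)" by (simp add: x_def field_simps)
  have bern: "1 + real (i+1) * (- x) \<le> (1 + (- x)) ^ (i+1)"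
    by (rule Bernoulli_inequality) (use x0 in simp)
  have "real (i+1) * x \<le> 1/2"
  proof -
    have "3 * (i + 1) \<le> m + 1" using mi(2) assms(2) i by presburger
    then have "real (3 * (i + 1)) \<le> real (m + 1)" by (simp only: of_nat_le_iff)
    then have "3 * (real i + 1) \<le> real m + 1" by simp
    then show ?thesis using m1 by (simp add: x_def field_simps)
  qed
  then have half: "1/2 \<le> (1 - x)^(i+1)" using bern by simp
  have "(4 - 6 / real (Suc m))^(i+1) * ct m \<le> ct n"
    using ct_low[OF m1, of "i+1"] mi(1) by simp
  then have "4^(i+1) * (1 - x)^(i+1) * ct m \<le> ct n"
    unfolding q power_mult_distrib .
  moreover have "4^(i+1) * (1/2) * ct m \<le> 4^(i+1) * (1 - x)^(i+1) * ct m"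
    using half ctm by (intro mult_right_mono mult_left_mono) auto
  ultimately have ctn_ge: "4^(i+1) * (1/2) * ct m \<le> ct n" by linarith
  have cpj: "real (cp j) = 2^i" using cp_eq[OF assms(1)] i by simp
  have Mj: "M j n = 2^i * (real m * ct m)"
    using M_closed[of j n] assms cpj by (simp add: m_def)
  have "M j n \<le> (2 * real n / 2^j) * ct n"
  proof -
    have "M j n = 2^i * (real m * ct m)" by (rule Mj)
    also have "\<dots> \<le> 2^i * (real n * ct m)" using mn ctm by (intro mult_left_mono mult_right_mono) auto
    also have "\<dots> = (2 * real n / 2^j) * (4^(i+1) * (1/2) * ct m)"
      by (simp add: i power_add field_simps power_mult_distrib[symmetric])
    also have "\<dots> \<le> (2 * real n / 2^j) * ct n"
      using ctn_ge by (intro mult_left_mono) auto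
    finally show ?thesis .
  qed
  then show ?thesis using ctn by (simp add: pos_divide_le_eq)
qed

lemma mu_lower:
  assumes "2 \<le> j" "j \<le> n"
  shows "real (n + 1 - j) / 2^j \<le> M j n / ct n"
proof -
  obtain i where i: "j = i + 2" using assms(1) by (metis add.commute le_Suc_ex)
  define m where "m = n + 1 - j"
  have m1: "m \<ge> 1" and mi: "m + (i + 1) = n"
    using assms i by (auto simp: m_def)
  have ctm: "ct m > 0" using ct_pos m1 by simp
  have ctn: "ct n > 0" using ct_pos assms by simp
  have up: "ct n \<le> 4^(i+1) * ct m" using ct_up[OF m1, of "i+1"] mi by simp
  have cpj: "real (cp j) = 2^i" using cp_eq[OF assms(1)] i by simp
  have Mj: "M j n = 2^i * (real m * ct m)"
    using M_closed[of j n] assms cpj by (simp add: m_def)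
  have "real m / 2^j * ct n \<le> real m / 2^j * (4^(i+1) * ct m)"
    using up by (intro mult_left_mono) auto
  also have "\<dots> = M j n" unfolding Mj
    by (simp add: i power_add field_simps power_mult_distrib[symmetric])
  finally show ?thesis using ctn by (simp add: m_def pos_le_divide_eq)
qed

lemma var_ratio:
  assumes "2 \<le> j" "4 * j \<le> n"
  shows "D j n * ct n \<le> (1 / (1 - 3 * real j / real n)) * (M j n)^2"
proof -
  obtain i where i: "j = i + 2" using assms(1) by (metis add.commute le_Suc_ex)
  define p where "p = n - 2 * (j - 1)"
  define m where "m = n + 1 - j"
  have p1: "p \<ge> 1" and mp: "p + (i + 1) = m" and mi: "m + (i + 1) = n" and pm: "p \<le> m"
    using assms i by (auto simp: p_def m_def)
  have m1: "m \<ge> 1" using p1 mp by simp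
  have ctm: "ct m > 0" using ct_pos m1 by simp
  have ctp: "ct p > 0" using ct_pos p1 by simp
  have ctn: "ct n > 0" using ct_pos assms by simp
  define y :: real where "y = 3 / (2 * (real p + 1))"
  have y0: "0 \<le> y" "y \<le> 1" using p1 by (auto simp: y_def field_simps)
  have q: "4 - 6 / real (Suc p) = 4 * (1 - y)" by (simp add: y_def field_simps)
  have bern: "1 + real (i+1) * (- y) \<le> (1 + (- y)) ^ (i+1)"
    by (rule Bernoulli_inequality) (use y0 in simp)
  define \<theta> where "\<theta> = 1 - real (i+1) * y"
  have nat_ineq: "(i + 1) * n \<le> 2 * j * (p + 1)"
  proof -
    obtain e where e: "n = 4 * i + 8 + e" using assms(2) i by (metis add.commute le_Suc_ex mult_2_right numeral_Bit0 add_mult_distrib2 mult.commute)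
    have pe: "p + 1 = 2 * i + 7 + e" using e i by (simp add: p_def)
    show ?thesis unfolding pe e i by (simp add: algebra_simps)
  qed
  have th: "1 - 3 * real j / real n \<le> \<theta>"
  proof -
    have "real ((i + 1) * n) \<le> real (2 * j * (p + 1))" using nat_ineq by (simp only: of_nat_le_iff)
    then have "(real i + 1) * real n \<le> 2 * real j * (real p + 1)" by (simp add: algebra_simps)
    then have "(real i + 1) * y \<le> 3 * real j / real n"
      using assms p1 by (simp add: y_def field_simps)
    then show ?thesis by (simp add: \<theta>_def add.commute)
  qed
  have pos: "0 < 1 - 3 * real j / real n" using assms by (simp add: field_simps)
  have th0: "0 < \<theta>" using th pos by linarith
  have "(4 - 6 / real (Suc p))^(i+1) * ct p \<le> ct m"
    using ct_low[OF p1, of "i+1"] mp by simp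
  then have "4^(i+1) * (1 - y)^(i+1) * ct p \<le> ct m"
    unfolding q power_mult_distrib .
  moreover have "4^(i+1) * \<theta> * ct p \<le> 4^(i+1) * (1 - y)^(i+1) * ct p"
    using bern ctp by (intro mult_right_mono mult_left_mono) (auto simp: \<theta>_def)
  ultimately have low: "4^(i+1) * \<theta> * ct p \<le> ct m" by linarith
  have up: "ct n \<le> 4^(i+1) * ct m" using ct_up[OF m1, of "i+1"] mi by simp
  define A where "A = real (cp j)^2 * (real m)^2"
  have A0: "A \<ge> 0" by (simp add: A_def)
  have Dc: "D j n = real (cp j)^2 * (real p * (real p - 1) * ct p)"
    using D_closed[of j n] assms by (simp add: p_def)
  have Mc: "M j n = real (cp j) * (real m * ct m)"
    using M_closed[of j n] assms by (simp add: m_def)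
  have pp: "real p * (real p - 1) \<le> (real m)^2"
  proof -
    have "real p * (real p - 1) \<le> real p * real p" using p1 by (simp add: mult_left_mono)
    also have "\<dots> \<le> real m * real m" using pm by (intro mult_mono) auto
    finally show ?thesis by (simp add: power2_eq_square)
  qed
  have "D j n * ct n \<le> A * ct p * ct n"
    unfolding Dc A_def using pp ctp ctn
    by (simp add: mult.assoc mult_left_mono mult_right_mono)
  also have "\<dots> \<le> A * ct p * (4^(i+1) * ct m)"
    using up A0 ctp by (intro mult_left_mono) auto
  finally have s1: "D j n * ct n \<le> A * ct p * (4^(i+1) * ct m)" .
  have s2: "\<theta> * (A * ct p * (4^(i+1) * ct m)) \<le> (M j n)^2"
  proof -
    have "\<theta> * (A * ct p * (4^(i+1) * ct m)) = A * ct m * (4^(i+1) * \<theta> * ct p)"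
      by (simp add: algebra_simps)
    also have "\<dots> \<le> A * ct m * ct m"
      using low A0 ctm by (intro mult_left_mono) auto
    also have "\<dots> = (M j n)^2" by (simp add: Mc A_def power2_eq_square algebra_simps)
    finally show ?thesis .
  qed
  have "\<theta> * (D j n * ct n) \<le> \<theta> * (A * ct p * (4^(i+1) * ct m))"
    using s1 th0 by (intro mult_left_mono) auto
  then have "\<theta> * (D j n * ct n) \<le> (M j n)^2" using s2 by linarith
  then have "D j n * ct n \<le> (M j n)^2 / \<theta>"
    using th0 by (simp add: pos_le_divide_eq mult.commute)
  also have "\<dots> \<le> (M j n)^2 / (1 - 3 * real j / real n)"
    using th pos by (intro divide_left_mono) auto
  finally show ?thesis by simp
qed

lemma cheb:
  assumes "n \<ge> 1" "M j n > 0"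
  shows "real (card {t\<in>trees n. cnt j t = 0}) / ct n \<le> D j n * ct n / (M j n)^2 + ct n / M j n - 1"
proof -
  define C where "C = ct n"
  define \<mu> where "\<mu> = M j n / C"
  have C0: "C > 0" using ct_pos assms by (simp add: C_def)
  have mu0: "\<mu> > 0" using assms C0 by (simp add: \<mu>_def)
  have Z: "real (card {t\<in>trees n. cnt j t = 0}) = (\<Sum>t\<in>trees n. of_bool (cnt j t = 0))"
    using finite_trees by (simp add: Collect_conj_eq)
  have "(\<Sum>t\<in>trees n. of_bool (cnt j t = 0)) \<le> (\<Sum>t\<in>trees n. (real (cnt j t) - \<mu>)^2 / \<mu>^2)"
    by (intro sum_mono) (use mu0 in auto)
  also have "\<dots> = (\<Sum>t\<in>trees n. real (cnt j t) * (real (cnt j t) - 1) + real (cnt j t)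
      - 2 * \<mu> * real (cnt j t) + \<mu>^2) / \<mu>^2"
    unfolding sum_divide_distrib by (intro sum.cong refl) (simp add: power2_eq_square algebra_simps)
  also have "\<dots> = (D j n + M j n - 2 * \<mu> * M j n + \<mu>^2 * C) / \<mu>^2"
    by (simp add: sum.distrib sum_subtractf D_def M_def C_def ct_def sum_distrib_left)
  finally have "real (card {t\<in>trees n. cnt j t = 0}) \<le> (D j n + M j n - 2 * \<mu> * M j n + \<mu>^2 * C) / \<mu>^2"
    using Z by simp
  then have "real (card {t\<in>trees n. cnt j t = 0}) / C \<le> (D j n + M j n - 2 * \<mu> * M j n + \<mu>^2 * C) / \<mu>^2 / C"
    using C0 by (intro divide_right_mono) auto
  also have "\<dots> = D j n * C / (M j n)^2 + C / M j n - 1"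
    using C0 assms(2) by (simp add: \<mu>_def field_simps power2_eq_square)
  finally show ?thesis by (simp add: C_def)
qed

lemma avg_eq: "avg_gamma n = (\<Sum>t\<in>trees n. real (gamma t)) / ct n"
  by (simp add: avg_gamma_def ct_def)

lemma avg_low_Z:
  assumes "n \<ge> 1"
  shows "real j * (1 - real (card {t\<in>trees n. cnt j t = 0}) / ct n) \<le> avg_gamma n"
proof -
  have C0: "ct n > 0" using ct_pos assms by simp
  have "(\<Sum>t\<in>trees n. real j * (1 - of_bool (cnt j t = 0))) \<le> (\<Sum>t\<in>trees n. real (gamma t))"
  proof (intro sum_mono)
    fix t show "real j * (1 - of_bool (cnt j t = 0)) \<le> real (gamma t)"
      using gamma_ge[of j t] by (cases "cnt j t = 0") auto
  qed
  moreover have "(\<Sum>t\<in>trees n. real j * (1 - of_bool (cnt j t = 0))) =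
      real j * (ct n - real (card {t\<in>trees n. cnt j t = 0}))"
    using finite_trees by (simp add: sum_distrib_left[symmetric] sum_subtractf ct_def Collect_conj_eq)
  ultimately have "real j * (ct n - real (card {t\<in>trees n. cnt j t = 0})) \<le> (\<Sum>t\<in>trees n. real (gamma t))"
    by simp
  then have "real j * (ct n - real (card {t\<in>trees n. cnt j t = 0})) / ct n \<le> avg_gamma n"
    unfolding avg_eq using C0 by (intro divide_right_mono) auto
  moreover have "real j * (ct n - real (card {t\<in>trees n. cnt j t = 0})) / ct n =
     real j * (1 - real (card {t\<in>trees n. cnt j t = 0}) / ct n)"
    using C0 by (simp add: field_simps)
  ultimately show ?thesis by simp
qed

lemma avg_lower_final:
  assumes "2 \<le> j" "4 * j \<le> n"
  shows "real j * (2 - 1 / (1 - 3 * real j / real n) - 2 * 2^j / real n) \<le> avg_gamma n"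
proof -
  define m where "m = n + 1 - j"
  have n1: "n \<ge> 1" using assms by simp
  have C0: "ct n > 0" using ct_pos n1 by simp
  have m1: "real m \<ge> 1" using assms by (simp add: m_def)
  have ml: "real m / 2^j \<le> M j n / ct n" using mu_lower[of j n] assms by (simp add: m_def)
  have mpos: "0 < real m / 2^j" using m1 by simp
  have M0: "M j n > 0" using ml mpos C0 by (smt (verit) divide_le_0_iff)
  have "ct n / M j n \<le> 2^j / real m"
  proof -
    have "ct n / M j n = 1 / (M j n / ct n)" by simp
    also have "\<dots> \<le> 1 / (real m / 2^j)"
    proof (rule divide_left_mono)
      show "0 < M j n / ct n * (real m / 2 ^ j)" using ml mpos by (intro mult_pos_pos) auto
    qed (use ml in auto)
    finally show ?thesis by simp
  qed
  also have "\<dots> \<le> 2 * 2^j / real n"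
  proof -
    have "real n \<le> 2 * real m" using assms by (simp add: m_def)
    then show ?thesis using m1 n1 by (simp add: field_simps)
  qed
  finally have cm: "ct n / M j n \<le> 2 * 2^j / real n" .
  have "D j n * ct n / (M j n)^2 \<le> 1 / (1 - 3 * real j / real n)"
    using var_ratio[OF assms] M0 by (simp add: pos_divide_le_eq)
  then have "real (card {t\<in>trees n. cnt j t = 0}) / ct n \<le> 1 / (1 - 3 * real j / real n) + 2 * 2^j / real n - 1"
    using cheb[OF n1 M0] cm by linarith
  then have "real j * (2 - 1 / (1 - 3 * real j / real n) - 2 * 2^j / real n) \<le>
      real j * (1 - real (card {t\<in>trees n. cnt j t = 0}) / ct n)"
    by (intro mult_left_mono) auto
  also have "\<dots> \<le> avg_gamma n" by (rule avg_low_Z[OF n1])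
  finally show ?thesis .
qed

lemma geo: "(\<Sum>j\<in>{k<..k+d}. (1/2::real)^j) = (1/2)^k - (1/2)^(k+d)"
proof (induction d)
  case 0 then show ?case by simp
next
  case (Suc d)
  have "{k<..k + Suc d} = insert (Suc (k + d)) {k<..k+d}" by auto
  then show ?case using Suc by simp
qed

lemma avg_upper_final:
  assumes "1 \<le> k" "k < K" "4 * K \<le> n"
  shows "avg_gamma n \<le> real k + 2 * real n / 2^k + 2 * (real n)^2 / 2^K"
proof -
  have n1: "n \<ge> 1" using assms by simp
  have C0: "ct n > 0" using ct_pos n1 by simp
  have "(\<Sum>t\<in>trees n. real (gamma t)) \<le>
        (\<Sum>t\<in>trees n. real k + (\<Sum>j\<in>{k<..K}. real (cnt j t)) + real (leaves t) * real (cnt K t))"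
    by (intro sum_mono gamma_upper assms(2))
  also have "\<dots> = real k * ct n + (\<Sum>j\<in>{k<..K}. M j n) + real n * M K n"
  proof -
    have sw: "(\<Sum>t\<in>trees n. \<Sum>j\<in>{k<..K}. real (cnt j t)) = (\<Sum>j\<in>{k<..K}. M j n)"
      unfolding M_def by (rule sum.swap)
    have lv: "(\<Sum>t\<in>trees n. real (leaves t) * real (cnt K t)) = real n * M K n"
      unfolding M_def sum_distrib_left by (intro sum.cong refl) (simp add: trees_def)
    show ?thesis unfolding sum.distrib sw lv by (simp add: ct_def)
  qed
  finally have S: "(\<Sum>t\<in>trees n. real (gamma t)) \<le> real k * ct n + (\<Sum>j\<in>{k<..K}. M j n) + real n * M K n" .
  have "avg_gamma n \<le> (real k * ct n + (\<Sum>j\<in>{k<..K}. M j n) + real n * M K n) / ct n"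
    unfolding avg_eq using S C0 by (intro divide_right_mono) auto
  also have "\<dots> = real k + (\<Sum>j\<in>{k<..K}. M j n / ct n) + real n * (M K n / ct n)"
    using C0 by (simp add: add_divide_distrib sum_divide_distrib)
  also have "(\<Sum>j\<in>{k<..K}. M j n / ct n) \<le> (\<Sum>j\<in>{k<..K}. 2 * real n * (1/2)^j)"
  proof (intro sum_mono)
    fix j assume "j \<in> {k<..K}"
    then have "2 \<le> j" "4 * j \<le> n" using assms by auto
    then show "M j n / ct n \<le> 2 * real n * (1/2)^j" using mu_upper by (simp add: power_one_over)
  qed
  also have "\<dots> \<le> 2 * real n / 2^k"
  proof -
    obtain d where d: "K = k + d" using assms(2) by (metis less_imp_add_positive)
    have "(\<Sum>j\<in>{k<..K}. 2 * real n * (1/2)^j) = 2 * real n * ((1/2)^k - (1/2)^(k+d))"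
      unfolding d by (simp add: sum_distrib_left[symmetric] geo)
    also have "\<dots> \<le> 2 * real n * (1/2)^k" by (intro mult_left_mono) auto
    finally show ?thesis by (simp add: power_one_over)
  qed
  also have "real n * (M K n / ct n) \<le> real n * (2 * real n / 2^K)"
    using mu_upper[of K n] assms by (intro mult_left_mono) auto
  finally show ?thesis by (simp add: power2_eq_square mult_ac)
qed


lemma two_pow_ge: "x \<le> real k \<Longrightarrow> 2 powr x \<le> (2::real)^k"
  by (metis powr_mono powr_realpow one_le_numeral zero_less_numeral)

lemma two_pow_le: "real k \<le> x \<Longrightarrow> (2::real)^k \<le> 2 powr x"
  by (metis powr_mono powr_realpow one_le_numeral zero_less_numeral)

lemma upper_ev:
  "eventually (\<lambda>n. avg_gamma n \<le> log 2 (real n) + sqrt (log 2 (real n)) + 1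
      + 2 / 2 powr sqrt (log 2 (real n)) + 2 / real n) sequentially"
proof -
  have ev: "eventually (\<lambda>n::nat. 1 \<le> log 2 (real n) \<and>
      log 2 (real n) + sqrt (log 2 (real n)) + 2 \<le> 3 * log 2 (real n) \<and>
      4 * (3 * log 2 (real n) + 1) \<le> real n) sequentially"
    by (intro eventually_conj; real_asymp)
  show ?thesis
  proof (rule eventually_mono[OF ev], elim conjE)
    fix n :: nat
    define L where "L = log 2 (real n)"
    assume a: "1 \<le> log 2 (real n)" "log 2 (real n) + sqrt (log 2 (real n)) + 2 \<le> 3 * log 2 (real n)"
      "4 * (3 * log 2 (real n) + 1) \<le> real n"
    then have L1: "1 \<le> L" and L2: "L + sqrt L + 2 \<le> 3 * L" and L3: "4 * (3 * L + 1) \<le> real n"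
      by (auto simp: L_def)
    have n0: "real n > 0" using L3 L1 by (smt (verit))
    have pL: "2 powr L = real n" using n0 by (simp add: L_def)
    define k where "k = nat \<lceil>L + sqrt L\<rceil>"
    define K where "K = nat \<lceil>3 * L\<rceil>"
    have sL: "0 \<le> sqrt L" using L1 by simp
    have k1: "L + sqrt L \<le> real k" "real k < L + sqrt L + 1" using L1 sL unfolding k_def by linarith+
    have K1: "3 * L \<le> real K" "real K < 3 * L + 1" using L1 unfolding K_def by linarith+
    have kpos: "1 \<le> k" using k1 L1 sL by linarith
    have kK: "k < K" using k1 K1 L2 by linarith
    have Kn: "4 * K \<le> n"
    proof -
      have "real (4 * K) \<le> real n" using K1 L3 by simp
      then show ?thesis by (simp only: of_nat_le_iff)
    qed
    have b: "avg_gamma n \<le> real k + 2 * real n / 2^k + 2 * (real n)^2 / 2^K"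
      by (rule avg_upper_final[OF kpos kK Kn])
    have e1: "2 * real n / 2^k \<le> 2 / 2 powr sqrt L"
    proof -
      have "2 powr (L + sqrt L) \<le> 2^k" using k1 by (intro two_pow_ge) auto
      then have "real n * 2 powr sqrt L \<le> 2^k" by (simp add: powr_add pL)
      then show ?thesis using n0 by (simp add: field_simps)
    qed
    have e2: "2 * (real n)^2 / 2^K \<le> 2 / real n"
    proof -
      have "2 powr (3 * L) \<le> 2^K" using K1 by (intro two_pow_ge) auto
      moreover have "2 powr (3 * L) = (real n)^3"
        by (simp add: powr_powr[symmetric] mult.commute[of 3] pL powr_numeral n0)
      ultimately have "(real n)^3 \<le> 2^K" by simp
      then show ?thesis using n0 by (simp add: field_simps power3_eq_cube power2_eq_square)
    qed
    show "avg_gamma n \<le> log 2 (real n) + sqrt (log 2 (real n)) + 1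
      + 2 / 2 powr sqrt (log 2 (real n)) + 2 / real n"
      using b e1 e2 k1 unfolding L_def[symmetric] by linarith
  qed
qed

lemma lower_ev:
  "eventually (\<lambda>n. (log 2 (real n) - sqrt (log 2 (real n)) - 1) *
      (2 - 1 / (1 - 3 * log 2 (real n) / real n) - 2 / 2 powr sqrt (log 2 (real n))) \<le> avg_gamma n) sequentially"
proof -
  have ev: "eventually (\<lambda>n::nat. 1 \<le> log 2 (real n) \<and> 3 \<le> log 2 (real n) - sqrt (log 2 (real n)) \<and>
      4 * log 2 (real n) \<le> real n \<and> 6 * log 2 (real n) \<le> real n \<and>
      0 \<le> 2 - 1 / (1 - 3 * log 2 (real n) / real n) - 2 / 2 powr sqrt (log 2 (real n))) sequentially"
    by (intro eventually_conj; real_asymp)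
  show ?thesis
  proof (rule eventually_mono[OF ev], elim conjE)
    fix n :: nat
    define L where "L = log 2 (real n)"
    assume a: "1 \<le> log 2 (real n)" "3 \<le> log 2 (real n) - sqrt (log 2 (real n))" "4 * log 2 (real n) \<le> real n"
      "6 * log 2 (real n) \<le> real n"
      "0 \<le> 2 - 1 / (1 - 3 * log 2 (real n) / real n) - 2 / 2 powr sqrt (log 2 (real n))"
    then have L0: "1 \<le> L" and L1: "3 \<le> L - sqrt L" and L3: "4 * L \<le> real n" and L4: "6 * L \<le> real n"
      and G0: "0 \<le> 2 - 1 / (1 - 3 * L / real n) - 2 / 2 powr sqrt L"
      by (simp_all only: L_def)
    have sL: "0 \<le> sqrt L" using L0 by simp
    have n0: "real n > 0" using L3 L0 by linarith
    have pL: "2 powr L = real n" using n0 by (simp add: L_def)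
    define j where "j = nat \<lfloor>L - sqrt L\<rfloor>"
    have j1: "real j \<le> L - sqrt L" "L - sqrt L - 1 < real j" using L1 unfolding j_def by linarith+
    have j2: "2 \<le> j" using j1 L1 by linarith
    have jn: "4 * j \<le> n"
    proof -
      have "real (4 * j) \<le> real n" using j1 L3 sL by linarith
      then show ?thesis by (simp only: of_nat_le_iff)
    qed
    have b: "real j * (2 - 1 / (1 - 3 * real j / real n) - 2 * 2^j / real n) \<le> avg_gamma n"
      by (rule avg_lower_final[OF j2 jn])
    have e1: "2 * 2^j / real n \<le> 2 / 2 powr sqrt L"
    proof -
      have "2^j \<le> 2 powr (L - sqrt L)" using j1 by (intro two_pow_le) auto
      also have "\<dots> = real n / 2 powr sqrt L" by (simp add: powr_diff pL)
      finally show ?thesis using n0 by (simp add: field_simps)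
    qed
    have e2: "1 / (1 - 3 * real j / real n) \<le> 1 / (1 - 3 * L / real n)"
    proof -
      have "3 * L < real n" using L4 L0 by linarith
      then have "3 * L / real n < 1" using n0 by (simp add: divide_less_eq)
      then have p: "0 < 1 - 3 * L / real n" by linarith
      have "3 * real j \<le> 3 * L" using j1 sL by linarith
      then have "3 * real j / real n \<le> 3 * L / real n" using n0 by (intro divide_right_mono) auto
      then have ba: "1 - 3 * L / real n \<le> 1 - 3 * real j / real n" by linarith
      have "0 < (1 - 3 * real j / real n) * (1 - 3 * L / real n)"
        using p ba by (intro mult_pos_pos) linarith+
      then show ?thesis by (rule divide_left_mono[OF ba zero_le_one])
    qed
    have G: "2 - 1 / (1 - 3 * L / real n) - 2 / 2 powr sqrt L \<le> 2 - 1 / (1 - 3 * real j / real n) - 2 * 2^j / real n"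
      using e1 e2 by linarith
    have "(L - sqrt L - 1) * (2 - 1 / (1 - 3 * L / real n) - 2 / 2 powr sqrt L)
        \<le> real j * (2 - 1 / (1 - 3 * real j / real n) - 2 * 2^j / real n)"
    proof (rule mult_mono)
      show "L - sqrt L - 1 \<le> real j" using j1 by linarith
      show "0 \<le> real j" by simp
    qed (rule G, rule G0)
    then show "(log 2 (real n) - sqrt (log 2 (real n)) - 1) *
      (2 - 1 / (1 - 3 * log 2 (real n) / real n) - 2 / 2 powr sqrt (log 2 (real n))) \<le> avg_gamma n"
      using b unfolding L_def[symmetric] by linarith
  qed
qed

lemma avg_equiv: "avg_gamma \<sim>[at_top] (\<lambda>n. log 2 (real n))"
proof (rule asymp_equivI')
  have lo: "(\<lambda>n::nat. (log 2 (real n) - sqrt (log 2 (real n)) - 1) *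
      (2 - 1 / (1 - 3 * log 2 (real n) / real n) - 2 / 2 powr sqrt (log 2 (real n))) / log 2 (real n))
      \<longlonglongrightarrow> 1" by real_asymp
  have up: "(\<lambda>n::nat. (log 2 (real n) + sqrt (log 2 (real n)) + 1
      + 2 / 2 powr sqrt (log 2 (real n)) + 2 / real n) / log 2 (real n)) \<longlonglongrightarrow> 1" by real_asymp
  have pos: "eventually (\<lambda>n::nat. 0 < log 2 (real n)) sequentially" by real_asymp
  show "(\<lambda>n. avg_gamma n / log 2 (real n)) \<longlonglongrightarrow> 1"
  proof (rule tendsto_sandwich[OF _ _ lo up])
    show "eventually (\<lambda>n. (log 2 (real n) - sqrt (log 2 (real n)) - 1) *
      (2 - 1 / (1 - 3 * log 2 (real n) / real n) - 2 / 2 powr sqrt (log 2 (real n))) / log 2 (real n)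
      \<le> avg_gamma n / log 2 (real n)) sequentially"
      using lower_ev pos by eventually_elim (simp add: divide_right_mono)
    show "eventually (\<lambda>n. avg_gamma n / log 2 (real n) \<le> (log 2 (real n) + sqrt (log 2 (real n)) + 1
      + 2 / 2 powr sqrt (log 2 (real n)) + 2 / real n) / log 2 (real n)) sequentially"
      using upper_ev pos by eventually_elim (simp add: divide_right_mono)
  qed
qed


definition c0 :: real where "c0 = 1/2 + 1 / (2 * sqrt 2)"
definition c1 :: real where "c1 = - 1 / sqrt 2 + 1/4"
definition c2 :: real where "c2 = 1 / (2 * ln 2)"

lemma U_repr:
  assumes "x < 1/4"
  shows "U_tilde x = c0 + c1 * (1 - 4*x) powr (1/2) + c2 * ((1 - 4*x) powr (1/2) * ln (1 - 4*x))"
proof -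
  have y: "0 < 1 - 4*x" using assms by simp
  have "log 2 (sqrt (1 - 4*x)) = ln (1 - 4*x) / (2 * ln 2)"
    using y by (simp add: log_def ln_sqrt)
  then show ?thesis using y
    by (simp add: U_tilde_def c0_def c1_def c2_def powr_half_sqrt algebra_simps)
qed

definition Pp :: "nat \<Rightarrow> real" where "Pp n = (\<Prod>k<n. (1/2 - real k))"

fun Qq :: "nat \<Rightarrow> real" where
  "Qq 0 = 0"
| "Qq (Suc n) = (1/2 - real n) * Qq n + Pp n"

lemma Pp_Suc: "Pp (Suc n) = Pp n * (1/2 - real n)"
  by (simp add: Pp_def)

definition gg :: "nat \<Rightarrow> real \<Rightarrow> real" where
  "gg n x = (if n = 0 then c0 else 0) + (-4)^n * ((c1 * Pp n + c2 * Qq n) * (1 - 4*x) powr (1/2 - real n)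
     + c2 * Pp n * ((1 - 4*x) powr (1/2 - real n) * ln (1 - 4*x)))"

lemma d_pow:
  assumes "x < 1/4"
  shows "((\<lambda>x. (1 - 4*x) powr b) has_real_derivative (b * (1 - 4*x) powr (b - 1) * (-4))) (at x)"
proof -
  have "((\<lambda>x. 1 - 4*x) has_real_derivative (-4)) (at x)"
    by (auto intro!: derivative_eq_intros)
  from DERIV_fun_powr[OF this, of b] assms show ?thesis by simp
qed

lemma d_powln:
  assumes "x < 1/4"
  shows "((\<lambda>x. (1 - 4*x) powr b * ln (1 - 4*x)) has_real_derivative
     (-4) * (b * (1 - 4*x) powr (b - 1) * ln (1 - 4*x) + (1 - 4*x) powr (b - 1))) (at x)"
proof -
  have y: "0 < 1 - 4*x" using assms by simp
  have l: "((\<lambda>x. ln (1 - 4*x)) has_real_derivative (1 / (1 - 4*x) * (-4))) (at x)"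
    using y by (auto intro!: derivative_eq_intros)
  have "((\<lambda>x. (1 - 4*x) powr b * ln (1 - 4*x)) has_real_derivative
     (b * (1 - 4*x) powr (b - 1) * (-4)) * ln (1 - 4*x) + (1 / (1 - 4*x) * (-4)) * (1 - 4*x) powr b) (at x)"
    by (rule DERIV_mult[OF d_pow[OF assms] l])
  moreover have pd: "(1 - 4*x) powr (b - 1) = (1 - 4*x) powr b / (1 - 4*x)"
    using y by (simp add: powr_diff)
  have e: "(b * (1 - 4*x) powr (b - 1) * (-4)) * ln (1 - 4*x) + (1 / (1 - 4*x) * (-4)) * (1 - 4*x) powr b
      = (-4) * (b * (1 - 4*x) powr (b - 1) * ln (1 - 4*x) + (1 - 4*x) powr (b - 1))"
    unfolding pd using y by (simp add: field_simps)
  ultimately show ?thesis by (simp only: e)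
qed

lemma d_gg:
  assumes "x < 1/4"
  shows "(gg n has_real_derivative gg (Suc n) x) (at x)"
proof -
  define b where "b = 1/2 - real n"
  have b1: "1/2 - real (Suc n) = b - 1" by (simp add: b_def)
  have "((\<lambda>x. (if n = 0 then c0 else 0) + (-4)^n * ((c1 * Pp n + c2 * Qq n) * (1 - 4*x) powr b
     + c2 * Pp n * ((1 - 4*x) powr b * ln (1 - 4*x)))) has_real_derivative
     0 + (-4)^n * ((c1 * Pp n + c2 * Qq n) * (b * (1 - 4*x) powr (b - 1) * (-4))
     + c2 * Pp n * ((-4) * (b * (1 - 4*x) powr (b - 1) * ln (1 - 4*x) + (1 - 4*x) powr (b - 1))))) (at x)"
    by (intro DERIV_add DERIV_const DERIV_cmult d_pow[OF assms] d_powln[OF assms])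
  moreover have "gg n = (\<lambda>x. (if n = 0 then c0 else 0) + (-4)^n * ((c1 * Pp n + c2 * Qq n) * (1 - 4*x) powr b
     + c2 * Pp n * ((1 - 4*x) powr b * ln (1 - 4*x))))"
    by (simp add: gg_def b_def fun_eq_iff)
  moreover have "0 + (-4)^n * ((c1 * Pp n + c2 * Qq n) * (b * (1 - 4*x) powr (b - 1) * (-4))
     + c2 * Pp n * ((-4) * (b * (1 - 4*x) powr (b - 1) * ln (1 - 4*x) + (1 - 4*x) powr (b - 1))))
     = gg (Suc n) x"
  proof -
    have q: "Qq (Suc n) = b * Qq n + Pp n" by (simp add: b_def)
    have p: "Pp (Suc n) = Pp n * b" by (simp add: Pp_Suc b_def)
    have r: "\<And>P Q A Lg m :: real. m * ((c1 * P + c2 * Q) * (b * A * (-4)) + c2 * P * ((-4) * (b * A * Lg + A)))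
       = ((-4) * m) * ((c1 * (P * b) + c2 * (b * Q + P)) * A + c2 * (P * b) * (A * Lg))"
      by (simp add: algebra_simps)
    show ?thesis unfolding gg_def b1 q p by (simp only: r power_Suc) simp
  qed
  ultimately show ?thesis by simp
qed

lemma deriv_U: "x < 1/4 \<Longrightarrow> (deriv ^^ n) U_tilde x = gg n x"
proof (induction n arbitrary: x)
  case 0
  have "gg 0 x = c0 + c1 * (1 - 4*x) powr (1/2) + c2 * ((1 - 4*x) powr (1/2) * ln (1 - 4*x))"
    by (simp add: gg_def Pp_def)
  then show ?case using U_repr[OF 0] by simp
next
  case (Suc n)
  have "((deriv ^^ n) U_tilde has_real_derivative gg (Suc n) x) (at x)"
  proof (rule has_field_derivative_transform_within_open[OF d_gg[OF Suc.prems]])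
    show "open {..<(1/4::real)}" by simp
    show "x \<in> {..<1/4}" using Suc.prems by simp
    show "\<And>y. y \<in> {..<1/4} \<Longrightarrow> gg n y = (deriv ^^ n) U_tilde y" using Suc.IH by simp
  qed
  then show ?case by (simp add: DERIV_imp_deriv)
qed

definition Ss :: "nat \<Rightarrow> real" where "Ss n = (\<Sum>k<n. 1 / (1/2 - real k))"

lemma Qq_eq: "Qq n = Pp n * Ss n"
proof (induction n)
  case 0 then show ?case by (simp add: Ss_def)
next
  case (Suc n)
  have "real (2 * n) \<noteq> 1" by (simp only: of_nat_eq_1_iff) presburger
  then have nz: "1/2 - real n \<noteq> 0" by simp
  have sS: "Ss (Suc n) = Ss n + 1 / (1/2 - real n)" by (simp add: Ss_def)
  have alg: "\<And>d P S :: real. d \<noteq> 0 \<Longrightarrow> d * (P * S) + P = P * d * (S + 1 / d)"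
    by (simp add: field_simps)
  show ?case unfolding Qq.simps Suc.IH sS Pp_Suc by (rule alg[OF nz])
qed

lemma bb_Pp: "bb n = (-4)^n * Pp n / fact n"
  by (simp add: bb_def gbinomial_prod_rev Pp_def atLeast0LessThan)

lemma taylor_U: "n \<ge> 1 \<Longrightarrow> taylor_coeff U_tilde n = bb n * (c1 + c2 * Ss n)"
  by (simp add: taylor_coeff_def deriv_U gg_def bb_Pp Qq_eq algebra_simps)


definition V :: "nat \<Rightarrow> real" where "V n = (\<Sum>k<n. 1 / (real k - 1/2))"

lemma V_Ss: "V n = - Ss n"
  unfolding V_def Ss_def sum_negf[symmetric]
proof (intro sum.cong refl)
  fix k
  have "real k - 1/2 = - (1/2 - real k)" by simp
  then show "1 / (real k - 1/2) = - (1 / (1/2 - real k))" by (simp only: divide_minus_right)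
qed

lemma V_Suc: "V (Suc n) = V n + 1 / (real n - 1/2)"
  by (simp add: V_def)

lemma inv_anti: "0 < a \<Longrightarrow> a \<le> b \<Longrightarrow> 1 / b \<le> 1 / (a::real)"
  by (intro divide_left_mono) (auto intro: mult_pos_pos)

lemma V_lower: "-2 + harm m \<le> V (Suc m)"
proof (induction m)
  case 0 then show ?case by (simp add: V_def harm_def)
next
  case (Suc m)
  have "1 / (real (Suc m)) \<le> 1 / (real (Suc m) - 1/2)"
    by (rule inv_anti) auto
  then show ?case using Suc by (simp add: V_Suc[of "Suc m"] harm_Suc inverse_eq_divide)
qed

lemma V_upper: "V (Suc (Suc m)) \<le> harm m"
proof (induction m)
  case 0 then show ?case by (simp add: V_def harm_def)
next
  case (Suc m)
  have "1 / (real (Suc (Suc m)) - 1/2) \<le> 1 / (real (Suc m))"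
    by (rule inv_anti) auto
  then show ?case using Suc by (simp add: V_Suc[of "Suc (Suc m)"] harm_Suc inverse_eq_divide)
qed

lemma harm_upper: "m \<ge> 1 \<Longrightarrow> harm m \<le> ln (real m + 1) + euler_mascheroni"
proof -
  assume m: "m \<ge> 1"
  have pos: "0 < inverse (2 + 2 * real m)" by (rule positive_imp_inverse_positive) simp
  have e: "ln (real m + 1) = ln (1 + real m)" by (simp add: add.commute)
  have "harm m - ln (1 + real m) + inverse (2 + 2 * real m) \<le> euler_mascheroni"
    using euler_mascheroni_bounds[OF m] by simp
  then show ?thesis unfolding e using pos by linarith
qed

lemma R_eq:
  assumes "n \<ge> 1"
  shows "taylor_coeff U_tilde n / real (card (trees n)) = -2 * c1 + V n / ln 2"
proof -
  have "real (card (trees n)) = - bb n / 2" using ct_eq_cc[of n] assms by (simp add: ct_def cc_def)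
  moreover have "bb n \<noteq> 0" using ct_pos[OF assms] ct_eq_cc[of n] assms by (auto simp: cc_def)
  ultimately have "taylor_coeff U_tilde n / real (card (trees n)) = -2 * (c1 + c2 * Ss n)"
    using assms by (simp add: taylor_U field_simps)
  moreover have "-2 * (c1 + c2 * Ss n) = -2 * c1 + V n / ln 2"
  proof -
    have l2: "ln (2::real) > 0" by simp
    then show ?thesis by (simp add: V_Ss c2_def field_simps)
  qed
  ultimately show ?thesis by simp
qed

lemma R_bounds:
  assumes "n \<ge> 2"
  shows "(-2 * c1 * ln 2 - 2 + ln (real n)) / ln (real n) \<le>
            (taylor_coeff U_tilde n / real (card (trees n))) / log 2 (real n)"
    and "(taylor_coeff U_tilde n / real (card (trees n))) / log 2 (real n) \<le>
            (-2 * c1 * ln 2 + euler_mascheroni + ln (real n)) / ln (real n)"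
proof -
  obtain m where m: "n = Suc (Suc m)" using assms by (metis add_2_eq_Suc le_Suc_ex)
  have lnpos: "ln (real n) > 0" using assms by simp
  have R: "(taylor_coeff U_tilde n / real (card (trees n))) / log 2 (real n) = (-2 * c1 * ln 2 + V n) / ln (real n)"
    using R_eq[of n] assms by (simp add: log_def field_simps)
  have lo: "-2 + ln (real n) \<le> V n"
    using V_lower[of "Suc m"] ln_le_harm[of "Suc m"] by (simp add: m add.commute)
  have up: "V n \<le> ln (real n) + euler_mascheroni"
  proof -
    have "V n \<le> harm m" using V_upper[of m] by (simp add: m)
    also have "\<dots> \<le> harm (Suc m)" by (rule harm_mono) simp
    also have "\<dots> \<le> ln (real (Suc m) + 1) + euler_mascheroni" by (rule harm_upper) simp
    finally show ?thesis by (simp add: m add.commute)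
  qed
  show "(-2 * c1 * ln 2 - 2 + ln (real n)) / ln (real n) \<le>
            (taylor_coeff U_tilde n / real (card (trees n))) / log 2 (real n)"
    unfolding R using lo lnpos by (intro divide_right_mono) auto
  show "(taylor_coeff U_tilde n / real (card (trees n))) / log 2 (real n) \<le>
            (-2 * c1 * ln 2 + euler_mascheroni + ln (real n)) / ln (real n)"
    unfolding R using up lnpos by (intro divide_right_mono) auto
qed

lemma lim_aux: "(\<lambda>n::nat. (a + ln (real n)) / ln (real n)) \<longlonglongrightarrow> 1"
  by real_asymp

lemma R_equiv: "(\<lambda>n. taylor_coeff U_tilde n / real (card (trees n))) \<sim>[at_top] (\<lambda>n. log 2 (real n))"
proof (rule asymp_equivI')
  show "(\<lambda>n. taylor_coeff U_tilde n / real (card (trees n)) / log 2 (real n)) \<longlonglongrightarrow> 1"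
  proof (rule tendsto_sandwich[OF _ _ lim_aux lim_aux])
    show "eventually (\<lambda>n. (-2 * c1 * ln 2 - 2 + ln (real n)) / ln (real n) \<le>
            (taylor_coeff U_tilde n / real (card (trees n))) / log 2 (real n)) sequentially"
      using eventually_ge_at_top[of "2::nat"] by eventually_elim (rule R_bounds(1))
    show "eventually (\<lambda>n. (taylor_coeff U_tilde n / real (card (trees n))) / log 2 (real n) \<le>
            (-2 * c1 * ln 2 + euler_mascheroni + ln (real n)) / ln (real n)) sequentially"
      using eventually_ge_at_top[of "2::nat"] by eventually_elim (rule R_bounds(2))
  qed
qed

theorem proposition3:
  shows "avg_gamma \<sim>[at_top] (\<lambda>n. taylor_coeff U_tilde n / real (card (trees n)))"
  using avg_equiv asymp_equiv_symI[OF R_equiv] by (rule asymp_equiv_trans)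


end
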